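(* Let $A,B\in\mathbb{Z}$ satisfy $|A|\leq B$ and $2|A|\geq B+3$, and let $T$ be the tile defined below and $c(T)=-T$. Then $T\cap c(T)$ contains at least two points.
   Context: Let $a(x,y)=(x+1,y)$ and $c(x,y)=(-x,-y)$. Let $g(\mathbf{x})=\begin{pmatrix}0&-B\\1&-A\end{pmatrix}\mathbf{x}+\left(\frac{B-1}{2},0\right)^T$, $\mathcal{D}=\{id,a,\dots,a^{B-2},c\}$ (note $B\geq 3$ under the hypotheses), and let $T$ be the unique nonempty compact set with $g(T)=\bigcup_{\delta\in\mathcal{D}}\delta(T)$. *)

theory Defs
  imports "HOL-Analysis.Analysis"
begin

definition tr_a :: "real \<times> real \<Rightarrow> real \<times> real" where
  "tr_a = (\<lambda>(x, y). (x + 1, y))"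

definition rot_c :: "real \<times> real \<Rightarrow> real \<times> real" where
  "rot_c = (\<lambda>(x, y). (- x, - y))"

definition gmap :: "int \<Rightarrow> int \<Rightarrow> real \<times> real \<Rightarrow> real \<times> real" where
  "gmap A B = (\<lambda>(x, y). (- real_of_int B * y + (real_of_int B - 1) / 2,
                         x - real_of_int A * y))"

definition digits :: "int \<Rightarrow> (real \<times> real \<Rightarrow> real \<times> real) set" where
  "digits B = {tr_a ^^ k | k. k \<le> nat (B - 2)} \<union> {rot_c}"

definition is_tile :: "int \<Rightarrow> int \<Rightarrow> (real \<times> real) set \<Rightarrow> bool" where
  "is_tile A B T \<longleftrightarrow> T \<noteq> {} \<and> compact T \<and>
     gmap A B ` T = (\<Union>\<delta>\<in>digits B. \<delta> ` T)"

end

theory Submission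
  imports Defs
begin

lemma tr_a_pow: "(tr_a ^^ k) u = u + (real k, 0)"
  by (induction k arbitrary: u) (auto simp: tr_a_def zero_prod_def split: prod.splits)

lemma rot_c_neg: "rot_c u = - u" by (cases u) (simp add: rot_c_def)

lemma digit_iso:
  assumes "d \<in> digits B"
  shows "\<exists>s::real. (s = 1 \<or> s = -1) \<and> (\<forall>u v. d u - d v = s *\<^sub>R (u - v))"
  using assms unfolding digits_def
  by (auto simp: tr_a_pow rot_c_neg fun_eq_iff)

definition Mm :: "real \<Rightarrow> real \<Rightarrow> real\<times>real \<Rightarrow> real\<times>real" where
  "Mm a b = (\<lambda>(x,y). (- b*y, x - a*y))"

lemma gmap_diff: "gmap A B u - gmap A B v = Mm (of_int A) (of_int B) (u - v)"
  by (cases u; cases v) (simp add: gmap_def Mm_def algebra_simps)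

lemma decay_complex:
  fixes a b :: real and x y s :: "nat \<Rightarrow> real"
  assumes b3: "b \<ge> 3" and disc: "a^2 < 4*b" and s: "\<forall>n. s n = 1 \<or> s n = -1"
   and ex: "\<forall>n. - b * y (Suc n) = s n * x n" and ey: "\<forall>n. x (Suc n) - a * y (Suc n) = s n * y n"
  shows "x \<longlonglongrightarrow> 0 \<and> y \<longlonglongrightarrow> 0"
proof -
  define Q where "Q n = (x n)^2 - a * x n * y n + b * (y n)^2" for n
  have hx: "x n = - s n * b * y (Suc n)" for n
    using ex[rule_format, of n] s[rule_format, of n] by auto
  have hy: "y n = s n * (x (Suc n) - a * y (Suc n))" for n
    using ey[rule_format, of n] s[rule_format, of n] by auto
  have rec: "Q n = b * Q (Suc n)" for n
  proof (cases "s n = 1")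
    case True
    then show ?thesis unfolding Q_def hx[of n] hy[of n] by (simp add: power2_eq_square algebra_simps)
  next
    case False
    then have "s n = -1" using s by auto
    then show ?thesis unfolding Q_def hx[of n] hy[of n] by (simp add: power2_eq_square algebra_simps)
  qed
  have Qn: "Q n = Q 0 * (1/b)^n" for n
  proof (induction n)
    case (Suc n)
    then show ?case using rec[of n] b3 by (simp add: field_simps)
  qed simp
  have "(\<lambda>n. Q 0 * (1/b)^n) \<longlonglongrightarrow> Q 0 * 0"
    by (intro tendsto_intros) (use b3 in auto)
  moreover have "Q = (\<lambda>n. Q 0 * (1/b)^n)" using Qn by (rule ext)
  ultimately have Qlim: "Q \<longlonglongrightarrow> 0" by simp
  define c where "c = 4*b - a^2"
  have c: "c > 0" using disc c_def by auto
  have id4: "4 * Q n = (2 * x n - a * y n)^2 + c * (y n)^2" for n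
    unfolding Q_def c_def by (simp add: power2_eq_square algebra_simps)
  have yb: "norm (y n) \<le> sqrt (4 * Q n / c)" for n
  proof -
    have "(y n)^2 \<le> 4 * Q n / c" using id4[of n] c by (simp add: field_simps)
    then have "sqrt ((y n)^2) \<le> sqrt (4 * Q n / c)" by (rule real_sqrt_le_mono)
    then show ?thesis by simp
  qed
  have xb: "norm (x n) \<le> (sqrt (4 * Q n) + \<bar>a\<bar> * sqrt (4 * Q n / c)) / 2" for n
  proof -
    have "(2 * x n - a * y n)^2 \<le> 4 * Q n" using id4[of n] c by (simp add: zero_le_mult_iff)
    then have "sqrt ((2 * x n - a * y n)^2) \<le> sqrt (4 * Q n)" by (rule real_sqrt_le_mono)
    then have h1: "\<bar>2 * x n - a * y n\<bar> \<le> sqrt (4 * Q n)" by simp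
    have h2: "\<bar>a * y n\<bar> \<le> \<bar>a\<bar> * sqrt (4 * Q n / c)" using yb[of n]
      by (simp add: abs_mult mult_left_mono)
    have "\<bar>2 * x n\<bar> \<le> \<bar>2 * x n - a * y n\<bar> + \<bar>a * y n\<bar>" by linarith
    then show ?thesis using h1 h2 by simp
  qed
  have l1: "(\<lambda>n. sqrt (4 * Q n / c)) \<longlonglongrightarrow> 0"
    using tendsto_real_sqrt[OF tendsto_divide[OF tendsto_mult[OF tendsto_const Qlim] tendsto_const, of c]] c
    by simp
  have l2: "(\<lambda>n. (sqrt (4 * Q n) + \<bar>a\<bar> * sqrt (4 * Q n / c)) / 2) \<longlonglongrightarrow> 0"
  proof -
    have "(\<lambda>n. sqrt (4 * Q n)) \<longlonglongrightarrow> 0"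
      using tendsto_real_sqrt[OF tendsto_mult[OF tendsto_const Qlim]] by simp
    from tendsto_divide[OF tendsto_add[OF this tendsto_mult[OF tendsto_const l1]] tendsto_const, of 2]
    show ?thesis by simp
  qed
  show ?thesis
    using Lim_null_comparison[OF always_eventually[OF allI[OF xb]] l2]
          Lim_null_comparison[OF always_eventually[OF allI[OF yb]] l1] by simp
qed

lemma decay_real:
  fixes a b r :: real and x y s :: "nat \<Rightarrow> real"
  assumes rr: "r^2 + a*r + b = 0" and r1: "1 < \<bar>r\<bar>" and rb: "1 + \<bar>r\<bar> < b"
   and s: "\<forall>n. s n = 1 \<or> s n = -1"
   and ex: "\<forall>n. - b * y (Suc n) = s n * x n" and ey: "\<forall>n. x (Suc n) - a * y (Suc n) = s n * y n"
  shows "x \<longlonglongrightarrow> 0 \<and> y \<longlonglongrightarrow> 0"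
proof -
  have b0: "b > 0" using rb r1 by linarith
  have hx: "x n = - s n * b * y (Suc n)" for n
    using ex[rule_format, of n] s[rule_format, of n] by auto
  have hy: "y n = s n * (x (Suc n) - a * y (Suc n))" for n
    using ey[rule_format, of n] s[rule_format, of n] by auto
  have bdef: "b = -(r^2) - a*r" using rr by simp
  define l where "l n = x n + r * y n" for n
  define N where "N n = max \<bar>l n\<bar> \<bar>y n\<bar>" for n
  define k where "k = max (1/\<bar>r\<bar>) ((1+\<bar>r\<bar>)/b)"
  have k0: "k \<ge> 0" unfolding k_def by (simp add: le_max_iff_disj)
  have k1: "k < 1" using r1 rb b0 by (auto simp: k_def field_simps)
  have hl: "l n = s n * r * l (Suc n)" for n
    unfolding l_def hx[of n] hy[of n] bdef by (simp add: power2_eq_square algebra_simps)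
  have s1: "\<bar>s n\<bar> = 1" for n using s[rule_format, of n] by (elim disjE) simp_all
  have lS: "\<bar>l (Suc n)\<bar> \<le> k * N n" for n
  proof -
    have "\<bar>l n\<bar> = \<bar>r\<bar> * \<bar>l (Suc n)\<bar>" using hl[of n] s1[of n] by (simp add: abs_mult)
    then have "\<bar>l (Suc n)\<bar> = (1/\<bar>r\<bar>) * \<bar>l n\<bar>" using r1 by (simp add: field_simps)
    also have "\<dots> \<le> k * N n" unfolding k_def N_def
      by (intro mult_mono) (use r1 k0[unfolded k_def] in auto)
    finally show ?thesis .
  qed
  have yS: "\<bar>y (Suc n)\<bar> \<le> k * N n" for n
  proof -
    have "b * \<bar>y (Suc n)\<bar> = \<bar>x n\<bar>" using ex[rule_format, of n] s1[of n] b0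
      by (metis abs_minus_cancel abs_mult abs_of_pos mult_1 mult_minus_left)
    also have "\<bar>x n\<bar> \<le> \<bar>l n\<bar> + \<bar>r\<bar> * \<bar>y n\<bar>" unfolding l_def
      by (metis abs_mult abs_minus_commute add_diff_cancel_right' abs_triangle_ineq4 diff_add_cancel order_trans order_refl)
    also have "\<dots> \<le> (1 + \<bar>r\<bar>) * N n" unfolding N_def
      by (simp add: distrib_right mult_left_mono add_mono)
    finally have "\<bar>y (Suc n)\<bar> \<le> ((1 + \<bar>r\<bar>)/b) * N n" using b0 by (simp add: field_simps)
    also have "\<dots> \<le> k * N n" unfolding k_def N_def by (intro mult_right_mono) auto
    finally show ?thesis .
  qed
  have NS: "N (Suc n) \<le> k * N n" for n using lS yS N_def by auto
  have Nn: "N n \<le> k^n * N 0" for n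
  proof (induction n)
    case (Suc n)
    have "N (Suc n) \<le> k * N n" by (rule NS)
    also have "\<dots> \<le> k * (k^n * N 0)" using Suc k0 by (rule mult_left_mono)
    finally show ?case by simp
  qed simp
  have glim: "(\<lambda>n. (1 + \<bar>r\<bar>) * (k^n * N 0)) \<longlonglongrightarrow> (1 + \<bar>r\<bar>) * (0 * N 0)"
    by (intro tendsto_intros) (use k0 k1 in auto)
  have N0: "N n \<ge> 0" for n unfolding N_def by auto
  have yb: "norm (y n) \<le> (1 + \<bar>r\<bar>) * (k^n * N 0)" for n
  proof -
    have "\<bar>y n\<bar> \<le> N n" unfolding N_def by auto
    also have "\<dots> \<le> k^n * N 0" by (rule Nn)
    also have "\<dots> \<le> (1 + \<bar>r\<bar>) * (k^n * N 0)"
    proof -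
      have "0 \<le> k^n * N 0" using N0[of 0] k0 by simp
      then show ?thesis by (simp add: mult_le_cancel_right1)
    qed
    finally show ?thesis by simp
  qed
  have xb: "norm (x n) \<le> (1 + \<bar>r\<bar>) * (k^n * N 0)" for n
  proof -
    have "\<bar>x n\<bar> \<le> \<bar>l n\<bar> + \<bar>r\<bar> * \<bar>y n\<bar>" unfolding l_def
      by (metis abs_mult abs_minus_commute add_diff_cancel_right' abs_triangle_ineq4 diff_add_cancel order_trans order_refl)
    also have "\<dots> \<le> (1 + \<bar>r\<bar>) * N n" unfolding N_def
      by (simp add: distrib_right mult_left_mono add_mono)
    also have "\<dots> \<le> (1 + \<bar>r\<bar>) * (k^n * N 0)" using Nn[of n] r1 by (intro mult_left_mono) auto
    finally show ?thesis by simp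
  qed
  have gl: "(\<lambda>n. (1 + \<bar>r\<bar>) * (k^n * N 0)) \<longlonglongrightarrow> 0" using glim by simp
  have "x \<longlonglongrightarrow> 0" by (rule Lim_null_comparison[OF _ gl]) (use xb in auto)
  moreover have "y \<longlonglongrightarrow> 0" by (rule Lim_null_comparison[OF _ gl]) (use yb in auto)
  ultimately show ?thesis by simp
qed

lemma root_exists_pos:
  fixes a b :: real
  assumes "b \<ge> 3" "\<bar>a\<bar> \<le> b" "a^2 \<ge> 4*b" "a \<ge> 0"
  shows "\<exists>r. r^2 + a*r + b = 0 \<and> 1 < \<bar>r\<bar> \<and> 1 + \<bar>r\<bar> < b"
proof -
  define q where "q = sqrt (a^2 - 4*b)"
  have q0: "q \<ge> 0" and q2: "q^2 = a^2 - 4*b" using assms by (auto simp: q_def)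
  have a3: "a > 3"
  proof (rule ccontr)
    assume "\<not> a > 3" then have "a^2 \<le> 3^2" using assms(4) by (intro power_mono) auto
    then show False using assms by simp
  qed
  have "q^2 < (a-2)^2" using q2 assms by (simp add: power2_eq_square algebra_simps)
  then have qa: "q < a - 2" using a3 by (smt (verit) power_mono q0)
  define r where "r = (-a + q)/2"
  have "r^2 + a*r + b = 0" unfolding r_def using q2 by (simp add: power2_eq_square field_simps)
  moreover have "\<bar>r\<bar> = (a - q)/2" unfolding r_def using qa q0 by auto
  ultimately show ?thesis using qa q0 assms by (intro exI[of _ r]) auto
qed

lemma root_exists:
  fixes a b :: real
  assumes "b \<ge> 3" "\<bar>a\<bar> \<le> b" "a^2 \<ge> 4*b"
  shows "\<exists>r. r^2 + a*r + b = 0 \<and> 1 < \<bar>r\<bar> \<and> 1 + \<bar>r\<bar> < b"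
proof (cases "a \<ge> 0")
  case True then show ?thesis using root_exists_pos assms by blast
next
  case False
  then obtain r where "r^2 + (-a)*r + b = 0 \<and> 1 < \<bar>r\<bar> \<and> 1 + \<bar>r\<bar> < b"
    using root_exists_pos[of b "-a"] assms by auto
  then show ?thesis by (intro exI[of _ "-r"]) auto
qed

lemma decay:
  fixes a b :: real and u :: "nat \<Rightarrow> real \<times> real" and s :: "nat \<Rightarrow> real"
  assumes "\<bar>a\<bar> \<le> b" "b \<ge> 3" "\<forall>n. s n = 1 \<or> s n = -1"
    "\<forall>n. Mm a b (u (Suc n)) = s n *\<^sub>R u n"
  shows "u \<longlonglongrightarrow> 0"
proof -
  define x where "x n = fst (u n)" for n
  define y where "y n = snd (u n)" for n
  have exy: "- b * y (Suc n) = s n * x n \<and> x (Suc n) - a * y (Suc n) = s n * y n" for n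
    using assms(4)[rule_format, of n] by (cases "u (Suc n)"; cases "u n") (simp add: x_def y_def Mm_def)
  have ex: "\<forall>n. - b * y (Suc n) = s n * x n" and ey: "\<forall>n. x (Suc n) - a * y (Suc n) = s n * y n"
    using exy by auto
  have "x \<longlonglongrightarrow> 0 \<and> y \<longlonglongrightarrow> 0"
  proof (cases "a^2 < 4*b")
    case True then show ?thesis using decay_complex[OF assms(2) True assms(3) ex ey] by blast
  next
    case False
    then obtain r where "r^2 + a*r + b = 0" "1 < \<bar>r\<bar>" "1 + \<bar>r\<bar> < b"
      using root_exists[of b a] assms by auto
    then show ?thesis using decay_real[OF _ _ _ assms(3) ex ey] by blast
  qed
  then have "(\<lambda>n. (x n, y n)) \<longlonglongrightarrow> (0, 0)" by (intro tendsto_Pair) auto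
  then show ?thesis by (simp add: x_def y_def zero_prod_def)
qed

lemma trk_digit: "k \<le> nat (B - 2) \<Longrightarrow> tr_a ^^ k \<in> digits B"
  unfolding digits_def by blast

lemma rot_digit: "rot_c \<in> digits B"
  unfolding digits_def by blast

lemma fixpt_in_T:
  assumes tile: "is_tile A B T" and AB: "\<bar>A\<bar> \<le> B" "B \<ge> 3"
    and d: "d \<in> digits B" and fp: "gmap A B p = d p"
  shows "p \<in> T"
proof -
  from tile have T: "T \<noteq> {}" "compact T" "gmap A B ` T = (\<Union>\<delta>\<in>digits B. \<delta> ` T)"
    by (auto simp: is_tile_def)
  obtain s where s: "s = 1 \<or> s = -1" "\<forall>u v. d u - d v = s *\<^sub>R (u - v)"
    using digit_iso[OF d] by blast
  have step: "\<exists>q'. q' \<in> T \<and> gmap A B q' = d q" if "q \<in> T" for q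
  proof -
    have "d q \<in> gmap A B ` T" using T(3) d that by blast
    then show ?thesis by (metis imageE)
  qed
  obtain q0 where q0: "q0 \<in> T" using T(1) by blast
  define q where "q = rec_nat q0 (\<lambda>n qn. SOME q'. q' \<in> T \<and> gmap A B q' = d qn)"
  have q0eq: "q 0 = q0" and qS: "q (Suc n) = (SOME q'. q' \<in> T \<and> gmap A B q' = d (q n))" for n
    by (simp_all add: q_def)
  have qT: "q n \<in> T" for n
  proof (induction n)
    case 0 then show ?case using q0 q0eq by simp
  next
    case (Suc n)
    then show ?case unfolding qS using someI_ex[OF step[OF Suc]] by blast
  qed
  have qg: "gmap A B (q (Suc n)) = d (q n)" for n
    unfolding qS using someI_ex[OF step[OF qT[of n]]] by blast
  define u where "u n = q n - p" for n
  have uM: "\<forall>n. Mm (of_int A) (of_int B) (u (Suc n)) = (\<lambda>n. s) n *\<^sub>R u n"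
  proof
    fix n
    have "Mm (of_int A) (of_int B) (u (Suc n)) = gmap A B (q (Suc n)) - gmap A B p"
      unfolding u_def gmap_diff ..
    also have "\<dots> = d (q n) - d p" using qg fp by simp
    also have "\<dots> = s *\<^sub>R u n" unfolding u_def by (rule s(2)[rule_format])
    finally show "Mm (of_int A) (of_int B) (u (Suc n)) = (\<lambda>n. s) n *\<^sub>R u n" by simp
  qed
  have a1: "\<bar>real_of_int A\<bar> \<le> real_of_int B" using AB by (metis of_int_abs of_int_le_iff)
  have a2: "real_of_int B \<ge> 3" using AB by simp
  have "u \<longlonglongrightarrow> 0" by (rule decay[OF a1 a2 _ uM]) (use s in auto)
  then have "(\<lambda>n. u n + p) \<longlonglongrightarrow> 0 + p" by (intro tendsto_intros)
  then have "q \<longlonglongrightarrow> p" by (simp add: u_def)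
  then show ?thesis by (rule closed_sequentially[OF compact_imp_closed[OF T(2)] qT])
qed

lemma pre_in_T:
  assumes tile: "is_tile A B T" and B: "B \<noteq> 0"
    and d: "d \<in> digits B" and p': "p' \<in> T" and fp: "gmap A B p = d p'"
  shows "p \<in> T"
proof -
  from tile have T: "gmap A B ` T = (\<Union>\<delta>\<in>digits B. \<delta> ` T)" by (auto simp: is_tile_def)
  then have "d p' \<in> gmap A B ` T" using d p' by blast
  then obtain q where q: "q \<in> T" "gmap A B q = gmap A B p" using fp by auto
  then have "Mm (of_int A) (of_int B) (q - p) = 0" using gmap_diff[of A B q p] by simp
  then have "q = p" using B by (cases q; cases p) (auto simp: Mm_def zero_prod_def)
  then show ?thesis using q by simp
qed

theorem lemma7p1:
  fixes A B :: int and T :: "(real \<times> real) set"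
  assumes "\<bar>A\<bar> \<le> B" and "2 * \<bar>A\<bar> \<ge> B + 3"
    and "is_tile A B T"
  shows "\<exists>p q. p \<noteq> q \<and> p \<in> T \<inter> rot_c ` T \<and> q \<in> T \<inter> rot_c ` T"
proof -
  have B3: "B \<ge> 3" using assms(1,2) by linarith
  have B0: "B \<noteq> 0" using B3 by simp
  note tile = assms(3)
  have memc: "p \<in> rot_c ` T" if "- p \<in> T" for p
    using image_eqI[of p rot_c "-p" T] that by (simp add: rot_c_neg)
  have fin: "\<exists>p q. p \<noteq> q \<and> p \<in> T \<inter> rot_c ` T \<and> q \<in> T \<inter> rot_c ` T"
    if "p \<in> T" "- p \<in> T" "p \<noteq> - p" for p
    using that memc[of p] memc[of "-p"] by (intro exI[of _ p] exI[of _ "-p"]) auto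
  have fixT: "p \<in> T" if "d \<in> digits B" "gmap A B p = d p" for p d
    using fixpt_in_T[OF tile assms(1) B3 that] .
  have pre: "p \<in> T" if "d \<in> digits B" "p' \<in> T" "gmap A B p = d p'" for p p' d
    using pre_in_T[OF tile B0 that] .
  have d0: "tr_a ^^ 0 \<in> digits B" by (rule trk_digit) simp
  have d1: "tr_a ^^ 1 \<in> digits B" by (rule trk_digit) (use B3 in simp)
  have dc: "rot_c \<in> digits B" by (rule rot_digit)
  show ?thesis
  proof (cases "B = 3")
    case False
    then have B4: "B \<ge> 4" using B3 by simp
    define y0 :: real where "y0 = (of_int B - 3)/(2*(1 + of_int A + of_int B))"
    define p where "p = ((1 + of_int A)*y0, y0)"
    have "1 + A + B > 0" using assms(1) by (simp add: abs_le_iff)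
    then have den: "1 + real_of_int A + real_of_int B > 0" by (metis of_int_0_less_iff of_int_add of_int_1)
    have key: "(1 + of_int A + of_int B) * y0 = (of_int B - 3)/2" using den y0_def by (simp add: field_simps)
    have e1: "- of_int B * y0 + (of_int B - 1)/2 = (1 + of_int A)*y0 + 1" using key by (simp add: algebra_simps)
    have e2: "- of_int B * (- y0) + (of_int B - 1)/2 = - ((1 + of_int A)*y0) + (of_int B - 2)" using key by (simp add: field_simps; linarith)
    have y0nz: "y0 \<noteq> 0" unfolding y0_def using B4 den by simp
    have g1: "gmap A B p = (tr_a ^^ 1) p" unfolding p_def gmap_def tr_a_pow using e1 by (simp add: algebra_simps)
    have dB: "tr_a ^^ nat (B - 2) \<in> digits B" by (rule trk_digit) simp
    have g2: "gmap A B (- p) = (tr_a ^^ nat (B - 2)) (- p)"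
      unfolding p_def gmap_def tr_a_pow using e2 B3 by (simp add: algebra_simps)
    show ?thesis
    proof (rule fin)
      show "p \<in> T" by (rule fixT[OF d1 g1])
      show "- p \<in> T" by (rule fixT[OF dB g2])
      show "p \<noteq> - p" using y0nz by (simp add: p_def)
    qed
  next
    case True
    then have A3: "A = 3 \<or> A = -3" using assms(1,2) by auto
    then show ?thesis
    proof
      assume A: "A = 3"
      have P0: "(0,0) \<in> T" by (rule fixT[OF d1]) (simp add: A True gmap_def tr_a_pow tr_a_def)
      have Pc: "(2,1) \<in> T" by (rule fixT[OF dc]) (simp add: A True gmap_def rot_c_def)
      have p1: "(1,1/3) \<in> T" by (rule pre[OF d0 P0]) (simp add: A True gmap_def)
      have p: "(1/3,0) \<in> T" by (rule pre[OF d0 p1]) (simp add: A True gmap_def)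
      have q1: "(0,-1/3) \<in> T" by (rule pre[OF d0 Pc]) (simp add: A True gmap_def)
      have q: "(-1/3,0) \<in> T" by (rule pre[OF d1 q1]) (simp add: A True gmap_def tr_a_pow tr_a_def)
      show ?thesis by (rule fin[of "(1/3,0)"]) (use p q in auto)
    next
      assume A: "A = -3"
      have P: "(-2,1) \<in> T" by (rule fixT[OF d0]) (simp add: A True gmap_def)
      have r2: "(-1,2/3) \<in> T" by (rule pre[OF d1 P]) (simp add: A True gmap_def tr_a_pow tr_a_def)
      have r1: "(-1/3,1/3) \<in> T" by (rule pre[OF d1 r2]) (simp add: A True gmap_def tr_a_pow tr_a_def)
      have p: "(0,1/9) \<in> T" by (rule pre[OF d1 r1]) (simp add: A True gmap_def tr_a_pow tr_a_def)
      have s2: "(0,-1/3) \<in> T" by (rule pre[OF dc P]) (simp add: A True gmap_def rot_c_def)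
      have s1: "(-4/3,1/3) \<in> T" by (rule pre[OF d0 s2]) (simp add: A True gmap_def)
      have q: "(0,-1/9) \<in> T" by (rule pre[OF dc s1]) (simp add: A True gmap_def rot_c_def)
      show ?thesis by (rule fin[of "(0,1/9)"]) (use p q in auto)
    qed
  qed
qed

end
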